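(* For every $m\ge1$ and every $n\ge\lfloor m/2\rfloor+m$, there exist $m$ preference lists on the ground set $\{1,\ldots,n\}$ for which the number of distinct images of efficient matchings is $\Omega\!\left(\frac{2^m}{\sqrt{m}}\right)$ (with the implied constant independent of $m,n$).
   Context: A system of $m$ preference lists on $\{1,\ldots,n\}$ assigns to each $i\in\{1,\ldots,m\}$ a list $L(i)$, a strict total ordering of $\{1,\ldots,n\}$. A matching is an injective map $\pi:\{1,\ldots,m\}\to\{1,\ldots,n\}$, and its image is the set $\pi(\{1,\ldots,m\})$. A matching $\pi$ is better than a distinct matching $\sigma$ if for each $i$ either $\pi(i)=\sigma(i)$ or $\pi(i)$ appears before $\sigma(i)$ in $L(i)$. A matching is efficient if no matching is better than it. *)

theory Defs
  imports Complex_Main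
begin

definition appears_before :: "nat list \<Rightarrow> nat \<Rightarrow> nat \<Rightarrow> bool" where
  "appears_before xs x y \<longleftrightarrow> (\<exists>j k. j < k \<and> k < length xs \<and> xs ! j = x \<and> xs ! k = y)"

definition pref_system :: "nat \<Rightarrow> nat \<Rightarrow> (nat \<Rightarrow> nat list) \<Rightarrow> bool" where
  "pref_system m n L \<longleftrightarrow> (\<forall>i\<in>{1..m}. distinct (L i) \<and> set (L i) = {1..n})"

definition is_matching :: "nat \<Rightarrow> nat \<Rightarrow> (nat \<Rightarrow> nat) \<Rightarrow> bool" where
  "is_matching m n \<pi> \<longleftrightarrow> inj_on \<pi> {1..m} \<and> \<pi> ` {1..m} \<subseteq> {1..n}"

definition better :: "(nat \<Rightarrow> nat list) \<Rightarrow> nat \<Rightarrow> (nat \<Rightarrow> nat) \<Rightarrow> (nat \<Rightarrow> nat) \<Rightarrow> bool" where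
  "better L m \<pi> \<sigma> \<longleftrightarrow> (\<exists>i\<in>{1..m}. \<pi> i \<noteq> \<sigma> i) \<and>
     (\<forall>i\<in>{1..m}. \<pi> i = \<sigma> i \<or> appears_before (L i) (\<pi> i) (\<sigma> i))"

definition efficient :: "(nat \<Rightarrow> nat list) \<Rightarrow> nat \<Rightarrow> nat \<Rightarrow> (nat \<Rightarrow> nat) \<Rightarrow> bool" where
  "efficient L m n \<pi> \<longleftrightarrow> is_matching m n \<pi> \<and> \<not> (\<exists>\<sigma>. is_matching m n \<sigma> \<and> better L m \<sigma> \<pi>)"

definition efficient_images :: "(nat \<Rightarrow> nat list) \<Rightarrow> nat \<Rightarrow> nat \<Rightarrow> nat set set" where
  "efficient_images L m n = {\<pi> ` {1..m} | \<pi>. efficient L m n \<pi>}"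

end

theory Submission
  imports Defs
begin

lemma binom_odd: "(2*k+2) choose (k+1) = 2 * ((2*k+1) choose k)"
proof -
  have "Suc k * (Suc (2*k+1) choose Suc k) = Suc (2*k+1) * ((2*k+1) choose k)"
    by (rule Suc_times_binomial)
  then have "(k+1) * ((2*k+2) choose (k+1)) = (k+1) * (2 * ((2*k+1) choose k))"
    by (simp del: binomial_Suc_Suc add: algebra_simps)
  then show ?thesis by (rule mult_left_cancel[THEN iffD1, rotated]) simp
qed

lemma binom_odd2: "(k+1) * ((2*k+1) choose k) = (2*k+1) * ((2*k) choose k)"
  using binomial_absorb_comp[of "2*k+1" k] by (simp add: Suc_diff_le)

lemma binom_step: "(k+1) * ((2*k+2) choose (k+1)) = 2*(2*k+1) * ((2*k) choose k)"
  using binom_odd[of k] binom_odd2[of k] by (simp add: algebra_simps)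

lemma cb: "1 \<le> k \<Longrightarrow> 16^k \<le> ((2*k) choose k)^2 * (4*k)"
proof (induction k)
  case 0 then show ?case by simp
next
  case (Suc k)
  show ?case
  proof (cases "k = 0")
    case True then show ?thesis by (simp add: numeral_eq_Suc)
  next
    case False
    then have step: "16^k \<le> ((2*k) choose k)^2 * (4*k)" using Suc by simp
  let ?C = "(2*k) choose k" and ?D = "(2*k+2) choose (k+1)"
  have e: "(k+1) * ?D = 2*(2*k+1) * ?C" using binom_step[of k] by (simp add: algebra_simps)
  have "16 * 16^k * (k+1) \<le> 16 * (?C^2 * (4*k)) * (k+1)" using step by (intro mult_right_mono mult_left_mono) auto
  then have "16^(k+1) * (k+1) \<le> 16 * (?C^2 * (4*k)) * (k+1)" by simp
  also have "\<dots> \<le> 16 * ?C^2 * (2*k+1)^2"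
  proof -
    have "4*k*(k+1) \<le> (2*k+1)^2" by (simp add: power2_eq_square algebra_simps)
    then have "16 * ?C^2 * (4*k*(k+1)) \<le> 16 * ?C^2 * (2*k+1)^2" by (rule mult_left_mono) simp
    then show ?thesis by (simp add: algebra_simps)
  qed
  also have "\<dots> = 4 * ((k+1) * ?D)^2 " using e by (simp add: power2_eq_square algebra_simps)
  finally have "16^(k+1) * (k+1) \<le> (?D^2 * (4*(k+1))) * (k+1)" by (simp add: power2_eq_square algebra_simps)
  then have "16^(k+1) \<le> ?D^2 * (4*(k+1))" using mult_le_cancel2[of "16^(k+1)" "k+1" "?D^2 * (4*(k+1))"] by (simp del: binomial_Suc_Suc power_Suc)
  moreover have "2 * Suc k = 2*k+2" by simp
  ultimately show ?thesis by (simp only: Suc_eq_plus1)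
  qed
qed

lemma cbm: "1 \<le> m \<Longrightarrow> 4^m \<le> 4 * (m choose (m div 2))^2 * m"
proof -
  assume m: "1 \<le> m"
  obtain k where k: "m = 2*k \<or> m = 2*k+1" by (metis oddE evenE)
  then show ?thesis
  proof
    assume mk: "m = 2*k"
    then have "1 \<le> k" using m by simp
    from cb[OF this] have "16^k \<le> ((2*k) choose k)^2 * (4*k)" .
    moreover have "(4::nat)^m = 16^k" using mk by (simp add: power_mult)
    ultimately show ?thesis using mk by simp
  next
    assume mk: "m = 2*k+1"
    have "16^(k+1) \<le> ((2*(k+1)) choose (k+1))^2 * (4*(k+1))" by (rule cb) simp
    also have "\<dots> = 4*((2*k+1) choose k)^2 * (4*(k+1))" using binom_odd[of k]
      by (simp add: power2_eq_square mult_2_right algebra_simps)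
    also have "\<dots> \<le> 4*((2*k+1) choose k)^2 * (4*(2*k+1))" by simp
    finally have "16^(k+1) \<le> 4*((2*k+1) choose k)^2 * (4*(2*k+1))" .
    moreover have "(16::nat)^(k+1) = 4 * 4^m" using mk by (simp add: power_mult power_add)
    moreover have "m div 2 = k" using mk by simp
    ultimately have "4 * 4^m \<le> 4 * (4 * (m choose (m div 2))^2 * m)" using mk by (simp add: algebra_simps)
    then show ?thesis by (simp add: algebra_simps)
  qed
qed

definition LL :: "nat \<Rightarrow> nat \<Rightarrow> nat \<Rightarrow> nat list" where
  "LL k n i = [1..<k+1] @ [k+i] @ filter (\<lambda>x. x \<noteq> k+i) [k+1..<n+1]"

lemma LL_distinct: "1 \<le> i \<Longrightarrow> distinct (LL k n i)"
  by (auto simp: LL_def)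

lemma LL_set: "1 \<le> i \<Longrightarrow> k + i \<le> n \<Longrightarrow> set (LL k n i) = {1..n}"
  by (auto simp: LL_def)

lemma LL_len: "k < length (LL k n i)" by (simp add: LL_def)

lemma LL_nth_k: "LL k n i ! k = k + i" by (simp add: LL_def nth_append nth_upt)

lemma LL_nth_low: "j < k \<Longrightarrow> LL k n i ! j = j + 1"
  by (simp add: LL_def nth_append nth_upt del: upt_Suc)

lemma ab_nonT:
  assumes "1 \<le> i" "appears_before (LL k n i) x (k+i)"
  shows "1 \<le> x \<and> x \<le> k"
proof -
  obtain j j' where jj: "j < j'" "j' < length (LL k n i)" "LL k n i ! j = x" "LL k n i ! j' = k+i"
    using assms(2) unfolding appears_before_def by blast
  have "j' = k"
    using nth_eq_iff_index_eq[OF LL_distinct[OF assms(1)] jj(2) LL_len] jj(4) LL_nth_k by metis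
  then show ?thesis using jj LL_nth_low by auto
qed

lemma ab_T:
  assumes "1 \<le> i" "1 \<le> y" "y \<le> k" "appears_before (LL k n i) x y"
  shows "1 \<le> x \<and> x < y"
proof -
  obtain j j' where jj: "j < j'" "j' < length (LL k n i)" "LL k n i ! j = x" "LL k n i ! j' = y"
    using assms(4) unfolding appears_before_def by blast
  have y: "LL k n i ! (y - 1) = y" "y - 1 < length (LL k n i)"
    using LL_nth_low[of "y-1" k n i] assms LL_len[of k n i] by auto
  have "j' = y - 1"
    using nth_eq_iff_index_eq[OF LL_distinct[OF assms(1)] jj(2) y(2)] jj(4) y(1) by metis
  then show ?thesis using jj LL_nth_low assms by auto
qed


lemma T_recover:
  fixes T :: "nat set" and k m :: nat
  assumes "T \<subseteq> {1..m}"
  shows "T = {i\<in>{1..m}. k + i \<notin> {1..k} \<union> (\<lambda>i. k+i) ` ({1..m} - T)}"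
proof -
  show ?thesis
  proof (rule set_eqI)
    fix x
    show "x \<in> T \<longleftrightarrow> x \<in> {i\<in>{1..m}. k + i \<notin> {1..k} \<union> (\<lambda>i. k+i) ` ({1..m} - T)}"
    proof
      assume x: "x \<in> T"
      then have "1 \<le> x" "x \<le> m" using assms by auto
      moreover have "k + x \<notin> (\<lambda>i. k+i) ` ({1..m} - T)" using x by auto
      ultimately show "x \<in> {i\<in>{1..m}. k + i \<notin> {1..k} \<union> (\<lambda>i. k+i) ` ({1..m} - T)}" by auto
    next
      assume "x \<in> {i\<in>{1..m}. k + i \<notin> {1..k} \<union> (\<lambda>i. k+i) ` ({1..m} - T)}"
      then show "x \<in> T" by auto
    qed
  qed
qed

lemma count:
  assumes m: "1 \<le> m" and kn: "k + m \<le> n"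
  shows "m choose k \<le> card (efficient_images (LL k n) m n)"
proof -
  let ?S = "{T. T \<subseteq> {1..m} \<and> card T = k}"
  let ?E = "efficient_images (LL k n) m n"
  define g where "g T = {1..k} \<union> (\<lambda>i. k+i) ` ({1..m} - T)" for T
  have img: "g T \<in> ?E" if T: "T \<in> ?S" for T
  proof -
    have Tsub: "T \<subseteq> {1..m}" and cT: "card T = k" using T by auto
    have finT: "finite T" using Tsub finite_subset by blast
    obtain f where f: "bij_betw f T {1..k}"
      using finite_same_card_bij[OF finT, of "{1..k}"] cT by auto
    have fT: "f i \<in> {1..k}" if "i \<in> T" for i by (rule bij_betw_apply[OF f that])
    have finj: "inj_on f T" using f by (simp add: bij_betw_def)
    have fimg: "f ` T = {1..k}" using f by (simp add: bij_betw_def)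
    define \<pi> where "\<pi> i = (if i \<in> T then f i else k + i)" for i
    have pimg: "\<pi> ` {1..m} = g T"
    proof -
      have "\<pi> ` {1..m} = f ` T \<union> (\<lambda>i. k+i) ` ({1..m} - T)"
        using Tsub unfolding \<pi>_def by (auto simp: image_iff)
      then show ?thesis using fimg g_def by simp
    qed
    have match: "is_matching m n \<pi>"
      unfolding is_matching_def
    proof
      show "inj_on \<pi> {1..m}"
      proof (rule inj_onI)
        fix i j assume ij: "i \<in> {1..m}" "j \<in> {1..m}" "\<pi> i = \<pi> j"
        show "i = j"
        proof (cases "i \<in> T"; cases "j \<in> T")
          assume "i \<in> T" "j \<in> T" then show ?thesis using ij finj unfolding \<pi>_def inj_on_def by auto
        next
          assume "i \<in> T" "j \<notin> T" then show ?thesis using ij fT[of i] unfolding \<pi>_def by auto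
        next
          assume "i \<notin> T" "j \<in> T" then show ?thesis using ij fT[of j] unfolding \<pi>_def by auto
        next
          assume "i \<notin> T" "j \<notin> T" then show ?thesis using ij unfolding \<pi>_def by auto
        qed
      qed
      show "\<pi> ` {1..m} \<subseteq> {1..n}"
        using fT kn unfolding \<pi>_def by force
    qed
    have eff: "efficient (LL k n) m n \<pi>"
      unfolding efficient_def
    proof (intro conjI match notI)
      assume "\<exists>\<sigma>. is_matching m n \<sigma> \<and> better (LL k n) m \<sigma> \<pi>"
      then obtain \<sigma> where sm: "is_matching m n \<sigma>" and sb: "better (LL k n) m \<sigma> \<pi>" by blast
      have sinj: "inj_on \<sigma> {1..m}" using sm is_matching_def by blast
      have H: "\<sigma> i = \<pi> i \<or> appears_before (LL k n i) (\<sigma> i) (\<pi> i)" if "i \<in> {1..m}" for i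
        using sb that unfolding better_def by blast
      have HT: "\<sigma> i \<in> {1..k} \<and> \<sigma> i \<le> f i" if "i \<in> T" for i
      proof -
        have i: "i \<in> {1..m}" "\<pi> i = f i" using that Tsub \<pi>_def by auto
        show ?thesis using H[OF i(1)] ab_T[of i "f i" k n "\<sigma> i"] fT[OF that] i by auto
      qed
      have HN: "\<sigma> i = k + i \<or> \<sigma> i \<in> {1..k}" if "i \<in> {1..m}" "i \<notin> T" for i
      proof -
        have "\<pi> i = k + i" using that \<pi>_def by auto
        then show ?thesis using H[OF that(1)] ab_nonT[of i k n "\<sigma> i"] that by auto
      qed
      have sT: "\<sigma> ` T = {1..k}"
      proof (rule card_subset_eq)
        show "\<sigma> ` T \<subseteq> {1..k}" using HT by auto
        have "inj_on \<sigma> T" using sinj Tsub inj_on_subset by blast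
        then have "card (\<sigma> ` T) = card T" by (rule card_image)
        then show "card (\<sigma> ` T) = card {1..k}" using cT by simp
      qed simp
      have eqN: "\<sigma> i = \<pi> i" if "i \<in> {1..m}" "i \<notin> T" for i
      proof -
        have "\<sigma> i \<notin> {1..k}"
        proof
          assume "\<sigma> i \<in> {1..k}"
          then obtain j where "j \<in> T" "\<sigma> j = \<sigma> i" using sT by (metis imageE)
          then show False using sinj that Tsub unfolding inj_on_def by blast
        qed
        then show ?thesis using HN[OF that] that \<pi>_def by auto
      qed
      have eqT: "\<sigma> i = \<pi> i" if "i \<in> T" for i
      proof (rule ccontr)
        assume ne: "\<sigma> i \<noteq> \<pi> i"
        have "\<sigma> i < f i" using HT[OF that] ne that \<pi>_def by auto
        then have "sum \<sigma> T < sum f T"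
          using sum_strict_mono_ex1[OF finT, of \<sigma> f] HT that by blast
        moreover have "sum \<sigma> T = sum id {1..k}"
          using sum.reindex[of \<sigma> T id] sinj Tsub inj_on_subset sT by (metis id_comp)
        moreover have "sum f T = sum id {1..k}"
          using sum.reindex[of f T id] finj fimg by (metis id_comp)
        ultimately show False by simp
      qed
      have "\<forall>i\<in>{1..m}. \<sigma> i = \<pi> i" using eqT eqN by blast
      then show False using sb better_def by blast
    qed
    show ?thesis unfolding efficient_images_def using eff pimg by blast
  qed
  have inj: "inj_on g ?S"
  proof (rule inj_onI)
    fix A B assume "A \<in> ?S" "B \<in> ?S" "g A = g B"
    then show "A = B" using T_recover[of A m k] T_recover[of B m k] unfolding g_def by auto
  qed
  have fin: "finite ?E"
  proof (rule finite_subset)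
    show "?E \<subseteq> Pow {1..n}" unfolding efficient_images_def efficient_def is_matching_def by auto
  qed simp
  have "m choose k = card ?S" using n_subsets[of "{1..m}" k] by simp
  also have "\<dots> = card (g ` ?S)" using card_image[OF inj] by simp
  also have "\<dots> \<le> card ?E" using img fin by (intro card_mono) auto
  finally show ?thesis .
qed


lemma real_bound:
  assumes m: "1 \<le> m" and B: "B \<le> C" and h: "4^m \<le> 4 * B^2 * m"
  shows "(1/2::real) * 2 ^ m / sqrt (real m) \<le> real C"
proof -
  have sm: "sqrt (real m) > 0" using m by simp
  have "(2::real)^m * 2^m = real (4^m)" by (simp add: power_mult_distrib[symmetric])
  also have "\<dots> \<le> real (4 * B^2 * m)" using h by (simp only: of_nat_le_iff)
  also have "\<dots> = (2 * real B * sqrt (real m)) * (2 * real B * sqrt (real m))"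
    using m by (simp add: power2_eq_square algebra_simps)
  finally have "(2::real)^m \<le> 2 * real B * sqrt (real m)"
    using power2_le_imp_le[of "(2::real)^m" "2 * real B * sqrt (real m)"]
    by (simp add: power2_eq_square)
  also have "\<dots> \<le> 2 * real C * sqrt (real m)" using B sm by simp
  finally show ?thesis using sm by (simp add: field_simps)
qed

theorem proposition1:
  shows "\<exists>c::real. c > 0 \<and>
    (\<forall>m n::nat. 1 \<le> m \<longrightarrow> m div 2 + m \<le> n \<longrightarrow>
       (\<exists>L. pref_system m n L \<and>
            real (card (efficient_images L m n)) \<ge> c * 2 ^ m / sqrt (real m)))"
proof (intro exI[of _ "1/2"] conjI allI impI)
  fix m n :: nat
  assume m: "1 \<le> m" and n: "m div 2 + m \<le> n"
  let ?L = "LL (m div 2) n"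
  have "pref_system m n ?L"
    unfolding pref_system_def using LL_distinct LL_set n by auto
  moreover have "(1/2) * 2 ^ m / sqrt (real m) \<le> real (card (efficient_images ?L m n))"
    using real_bound[OF m count[OF m n] cbm[OF m]] .
  ultimately show "\<exists>L. pref_system m n L \<and>
            real (card (efficient_images L m n)) \<ge> (1/2) * 2 ^ m / sqrt (real m)" by blast
qed simp

end
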